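(* For all $n\ge 2$, $\sum_{i=0}^{n-1} g_i g_{n-1-i}=g_n+f_n$.
   Context: For $x\in S_n$, $\mathrm{ind}_x(a)$ is the position of the value $a$ in $x$, and $\mathrm{small}_{k}(x)$ is the subsequence of $x$ formed by the entries $1,\dots,k$. An occurrence of the bivincular pattern $123^{\star}$ in $x$ is a pair of indices $a<b<n$ with $x_a<x_b$ and $x_{b+1}=x_b+1$. Let $g_n=|\mathrm{Av}_n(132,123^{\star})|$ be the number of permutations in $S_n$ avoiding both the classical pattern $132$ and $123^{\star}$ (with $g_0=1$), and let $f_n$ be the number of $x\in S_n$ avoiding $132$ such that $\mathrm{ind}_x(n)-1=\mathrm{ind}_x(n-1)>1$ and $\mathrm{small}_{n-1}(x)$ avoids $123^{\star}$. *)

theory Defs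
  imports Main
begin

text \<open>Permutations of [n] in one-line notation: lists of length n whose entries are
  exactly 1..n (distinct). List positions are 0-based; the paper's positions are 1-based.\<close>
definition perms :: "nat \<Rightarrow> nat list set" where
  "perms n = {xs. distinct xs \<and> set xs = {1..n}}"

definition contains132 :: "nat list \<Rightarrow> bool" where
  "contains132 xs \<longleftrightarrow> (\<exists>i j k. i < j \<and> j < k \<and> k < length xs \<and>
      xs ! i < xs ! k \<and> xs ! k < xs ! j)"

definition contains123star :: "nat list \<Rightarrow> bool" where
  "contains123star xs \<longleftrightarrow> (\<exists>a b. a < b \<and> Suc b < length xs \<and>
      xs ! a < xs ! b \<and> xs ! Suc b = xs ! b + 1)"

text \<open>1-based position of value v in x.\<close>
definition ind :: "nat list \<Rightarrow> nat \<Rightarrow> nat" where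
  "ind xs v = Suc (LEAST i. i < length xs \<and> xs ! i = v)"

definition small :: "nat \<Rightarrow> nat list \<Rightarrow> nat list" where
  "small k xs = filter (\<lambda>v. v \<le> k) xs"

definition g :: "nat \<Rightarrow> nat" where
  "g n = card {xs \<in> perms n. \<not> contains132 xs \<and> \<not> contains123star xs}"

definition f :: "nat \<Rightarrow> nat" where
  "f n = card {xs \<in> perms n. \<not> contains132 xs \<and>
      ind xs n - 1 = ind xs (n - 1) \<and> ind xs (n - 1) > 1 \<and>
      \<not> contains123star (small (n - 1) xs)}"

end

theory Submission
  imports Defs
begin

lemma c123_shift: "contains123star (map (\<lambda>v. v + c) L) \<longleftrightarrow> contains123star L"
  unfolding contains123star_def
  apply (rule iffI; elim exE conjE)
  subgoal for a b by (rule exI[of _ a], rule exI[of _ b]) auto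
  subgoal for a b by (rule exI[of _ a], rule exI[of _ b]) auto
  done

lemma c132_shift: "contains132 (map (\<lambda>v. v + c) L) \<longleftrightarrow> contains132 L"
  unfolding contains132_def
  apply (rule iffI; elim exE conjE)
  subgoal for i j k by (rule exI[of _ i], rule exI[of _ j], rule exI[of _ k]) auto
  subgoal for i j k by (rule exI[of _ i], rule exI[of _ j], rule exI[of _ k]) auto
  done

lemma c123_app:
  assumes "\<forall>x\<in>set A. \<forall>y\<in>set B. y < x"
  shows "contains123star (A @ B) \<longleftrightarrow> contains123star A \<or> contains123star B"
proof
  assume "contains123star (A @ B)"
  then obtain a b where ab: "a < b" "Suc b < length (A@B)" "(A@B) ! a < (A@B) ! b"
     "(A@B) ! Suc b = (A@B) ! b + 1" unfolding contains123star_def by blast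
  show "contains123star A \<or> contains123star B"
  proof (cases "Suc b < length A")
    case True
    then have "contains123star A" using ab unfolding contains123star_def
      by (intro exI[of _ a] exI[of _ b]) (auto simp: nth_append)
    then show ?thesis ..
  next
    case F: False
    show ?thesis
    proof (cases "b < length A")
      case True
      then have "Suc b = length A" using F by simp
      then have "(A@B) ! Suc b = B ! 0" "(A@B) ! b = A ! b" using True by (auto simp: nth_append)
      moreover have "B ! 0 \<in> set B" using ab \<open>Suc b = length A\<close> by auto
      moreover have "A ! b \<in> set A" using True by auto
      ultimately show ?thesis using ab(4) assms by fastforce
    next
      case False
      show ?thesis
      proof (cases "a < length A")
        case True
        then have "(A@B) ! a \<in> set A" "(A@B) ! b \<in> set B" using False ab(2) by (auto simp: nth_append)
        then show ?thesis using ab(3) assms by fastforce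
      next
        case False2: False
        have "contains123star B" unfolding contains123star_def
          using ab False False2
          by (intro exI[of _ "a - length A"] exI[of _ "b - length A"])
             (auto simp: nth_append Suc_diff_le)
        then show ?thesis ..
      qed
    qed
  qed
next
  assume "contains123star A \<or> contains123star B"
  then show "contains123star (A @ B)"
  proof
    assume "contains123star A"
    then obtain a b where ab: "a < b" "Suc b < length A" "A ! a < A ! b" "A ! Suc b = A ! b + 1"
      unfolding contains123star_def by blast
    then show ?thesis unfolding contains123star_def
      by (intro exI[of _ a] exI[of _ b]) (auto simp: nth_append)
  next
    assume "contains123star B"
    then obtain a b where ab: "a < b" "Suc b < length B" "B ! a < B ! b" "B ! Suc b = B ! b + 1"
      unfolding contains123star_def by blast
    then show ?thesis unfolding contains123star_def
      by (intro exI[of _ "a + length A"] exI[of _ "b + length A"]) (auto simp: nth_append)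
  qed
qed

lemma c123_snoc:
  assumes "distinct A" "\<forall>x\<in>set A. x < m"
  shows "contains123star (A @ [m]) \<longleftrightarrow> contains123star A \<or> (length A \<ge> 2 \<and> last A + 1 = m)"
proof
  assume "contains123star (A @ [m])"
  then obtain a b where ab: "a < b" "Suc b < length (A@[m])" "(A@[m]) ! a < (A@[m]) ! b"
     "(A@[m]) ! Suc b = (A@[m]) ! b + 1" unfolding contains123star_def by blast
  show "contains123star A \<or> (length A \<ge> 2 \<and> last A + 1 = m)"
  proof (cases "Suc b < length A")
    case True
    then have "contains123star A" using ab unfolding contains123star_def
      by (intro exI[of _ a] exI[of _ b]) (auto simp: nth_append)
    then show ?thesis ..
  next
    case False
    then have "Suc b = length A" using ab(2) by simp
    then have "A \<noteq> []" "b = length A - 1" by auto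
    then have "last A = A ! b" by (simp add: last_conv_nth)
    then have "last A + 1 = m" using ab(4) \<open>Suc b = length A\<close>
      by (auto simp: nth_append)
    then show ?thesis using ab(1) \<open>Suc b = length A\<close> by auto
  qed
next
  assume "contains123star A \<or> (length A \<ge> 2 \<and> last A + 1 = m)"
  then show "contains123star (A @ [m])"
  proof
    assume "contains123star A"
    then obtain a b where ab: "a < b" "Suc b < length A" "A ! a < A ! b" "A ! Suc b = A ! b + 1"
      unfolding contains123star_def by blast
    then show ?thesis unfolding contains123star_def
      by (intro exI[of _ a] exI[of _ b]) (auto simp: nth_append)
  next
    assume h: "length A \<ge> 2 \<and> last A + 1 = m"
    have "A ! 0 \<noteq> A ! (length A - 1)" using h assms(1) by (subst nth_eq_iff_index_eq) auto
    moreover have "A ! 0 < m"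
    proof -
      have "0 < length A" using h by linarith
      then have "A ! 0 \<in> set A" by (rule nth_mem)
      then show ?thesis using assms(2) by blast
    qed
    moreover have "last A = A ! (length A - 1)"
    proof -
      have "length A \<noteq> 0" using h by linarith
      then have "A \<noteq> []" by blast
      then show ?thesis by (rule last_conv_nth)
    qed
    ultimately have "A ! 0 < A ! (length A - 1)" using h by linarith
    then show ?thesis unfolding contains123star_def using h
      by (intro exI[of _ 0] exI[of _ "length A - 1"]) (auto simp: nth_append last_conv_nth)
  qed
qed

lemma c132_split:
  assumes "\<forall>x\<in>set A. \<forall>y\<in>set B. y < x" "\<forall>x\<in>set A. x < m" "\<forall>x\<in>set B. x < m"
  shows "contains132 (A @ m # B) \<longleftrightarrow> contains132 A \<or> contains132 B"
proof
  assume "contains132 (A @ m # B)"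
  then obtain i j l where h: "i < j" "j < l" "l < length (A @ m # B)"
    "(A @ m # B) ! i < (A @ m # B) ! l" "(A @ m # B) ! l < (A @ m # B) ! j"
    unfolding contains132_def by blast
  let ?x = "A @ m # B"
  have mem: "\<And>p. p < length ?x \<Longrightarrow> (p < length A \<and> ?x ! p = A ! p) \<or> (p = length A \<and> ?x ! p = m)
      \<or> (p > length A \<and> ?x ! p = B ! (p - Suc (length A)) \<and> p - Suc (length A) < length B)"
    by (auto simp: nth_append nth_Cons')
  have inA: "\<And>p. p < length A \<Longrightarrow> A ! p \<in> set A" by auto
  have inB: "\<And>p. p < length B \<Longrightarrow> B ! p \<in> set B" by auto
  show "contains132 A \<or> contains132 B"
  proof (cases "l < length A")
    case True
    then show ?thesis using h unfolding contains132_def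
      by (intro disjI1 exI[of _ i] exI[of _ j] exI[of _ l]) (auto simp: nth_append)
  next
    case lA: False
    show ?thesis
    proof (cases "i > length A")
      case True
      then show ?thesis using h unfolding contains132_def
        by (intro disjI2 exI[of _ "i - Suc (length A)"] exI[of _ "j - Suc (length A)"]
            exI[of _ "l - Suc (length A)"]) (auto simp: nth_append nth_Cons')
    next
      case False
      have "l < length ?x" "j < length ?x" "i < length ?x" using h by auto
      from mem[OF this(1)] mem[OF this(2)] mem[OF this(3)] h lA False
      show ?thesis using assms inA inB
        by (smt (verit) leD less_trans nat_neq_iff)
    qed
  qed
next
  assume "contains132 A \<or> contains132 B"
  then show "contains132 (A @ m # B)"
  proof
    assume "contains132 A"
    then obtain i j l where h: "i < j" "j < l" "l < length A" "A ! i < A ! l" "A ! l < A ! j"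
      unfolding contains132_def by blast
    then show ?thesis unfolding contains132_def
      by (intro exI[of _ i] exI[of _ j] exI[of _ l]) (auto simp: nth_append)
  next
    assume "contains132 B"
    then obtain i j l where h: "i < j" "j < l" "l < length B" "B ! i < B ! l" "B ! l < B ! j"
      unfolding contains132_def by blast
    then show ?thesis unfolding contains132_def
      by (intro exI[of _ "i + Suc (length A)"] exI[of _ "j + Suc (length A)"]
          exI[of _ "l + Suc (length A)"]) (auto simp: nth_append)
  qed
qed

lemma c132_appL: "contains132 A \<Longrightarrow> contains132 (A @ B)"
  unfolding contains132_def
  apply (elim exE conjE)
  subgoal for i j k by (rule exI[of _ i], rule exI[of _ j], rule exI[of _ k]) (auto simp: nth_append)
  done

lemma c132_appR: "contains132 B \<Longrightarrow> contains132 (A @ B)"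
  unfolding contains132_def
  apply (elim exE conjE)
  subgoal for i j k by (rule exI[of _ "i + length A"], rule exI[of _ "j + length A"],
        rule exI[of _ "k + length A"]) (auto simp: nth_append)
  done

lemma ind_eq: "distinct xs \<Longrightarrow> i < length xs \<Longrightarrow> xs ! i = v \<Longrightarrow> ind xs v = Suc i"
  unfolding ind_def
  by (rule arg_cong[where f=Suc], rule Least_equality) (auto simp: nth_eq_iff_index_eq)

lemma ind_nth: assumes "v \<in> set xs" shows "ind xs v - 1 < length xs \<and> xs ! (ind xs v - 1) = v"
proof -
  have "\<exists>i. i < length xs \<and> xs ! i = v" using assms by (simp add: in_set_conv_nth)
  then have "(LEAST i. i < length xs \<and> xs ! i = v) < length xs \<and> xs ! (LEAST i. i < length xs \<and> xs ! i = v) = v"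
    by (rule LeastI_ex)
  then show ?thesis unfolding ind_def by simp
qed

lemma perms_length: "L \<in> perms k \<Longrightarrow> length L = k"
  unfolding perms_def using distinct_card by fastforce

lemma perms_finite: "finite (perms n)"
proof -
  have "perms n \<subseteq> {xs. set xs \<subseteq> {1..n} \<and> length xs = n}"
    using perms_length unfolding perms_def by auto
  moreover have "finite {xs. set xs \<subseteq> {1..n} \<and> length xs = n}"
    by (rule finite_lists_length_eq) simp
  ultimately show ?thesis by (rule finite_subset)
qed

lemma down_closed:
  assumes "finite S" "\<forall>x\<in>S. x \<ge> (1::nat)" "\<forall>r\<in>S. \<forall>v. 1 \<le> v \<and> v < r \<longrightarrow> v \<in> S"
  shows "S = {1..card S}"
proof (cases "S = {}")
  case True then show ?thesis by simp
next
  case False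
  let ?M = "Max S"
  have "S \<subseteq> {1..?M}" using assms False by auto
  moreover have "{1..?M} \<subseteq> S"
  proof
    fix v assume v: "v \<in> {1..?M}"
    have "?M \<in> S" using assms False by simp
    then show "v \<in> S" using v assms(3) by (cases "v = ?M") auto
  qed
  ultimately have e: "S = {1..?M}" by blast
  have "card {1..?M} = ?M" by simp
  then show ?thesis using e by metis
qed

lemma build_ok:
  assumes "k < n" "L \<in> perms k" "R \<in> perms (n - 1 - k)" "\<not> contains132 L" "\<not> contains132 R"
  shows "map (\<lambda>v. v + (n - 1 - k)) L @ n # R \<in> perms n \<and>
         \<not> contains132 (map (\<lambda>v. v + (n - 1 - k)) L @ n # R)"
proof -
  let ?m = "n - 1 - k"
  let ?A = "map (\<lambda>v. v + ?m) L"
  have sL: "set L = {1..k}" and dL: "distinct L" using assms(2) unfolding perms_def by auto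
  have sR: "set R = {1..?m}" and dR: "distinct R" using assms(3) unfolding perms_def by auto
  have sA: "set ?A = {1 + ?m..k + ?m}" using sL by (simp add: image_add_atLeastAtMost')
  have km: "k + ?m = n - 1" using assms(1) by simp
  have dA: "distinct ?A" using dL by (simp add: distinct_map inj_on_def)
  have AR: "\<forall>x\<in>set ?A. \<forall>y\<in>set R. y < x" using sA sR by auto
  have An: "\<forall>x\<in>set ?A. x < n" using sA km assms(1) by auto
  have Rn: "\<forall>x\<in>set R. x < n" using sR assms(1) by auto
  have "distinct (?A @ n # R)" using dA dR AR An Rn by auto
  moreover have "set (?A @ n # R) = {1..n}"
  proof -
    have "set (?A @ n # R) = {1 + ?m..k + ?m} \<union> {n} \<union> {1..?m}" using sA sR by auto
    also have "\<dots> = {1..n}" using km assms(1) by auto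
    finally show ?thesis .
  qed
  moreover have "\<not> contains132 (?A @ n # R)"
    using c132_split[OF AR An Rn] c132_shift assms(4,5) by simp
  ultimately show ?thesis unfolding perms_def by simp
qed

lemma decomp:
  assumes "xs \<in> perms n" "\<not> contains132 xs" "n \<ge> 1"
  shows "\<exists>k L R. k < n \<and> L \<in> perms k \<and> R \<in> perms (n - 1 - k) \<and> \<not> contains132 L \<and>
     \<not> contains132 R \<and> xs = map (\<lambda>v. v + (n - 1 - k)) L @ n # R"
proof -
  have sx: "set xs = {1..n}" and dx: "distinct xs" using assms(1) unfolding perms_def by auto
  have lx: "length xs = n" using perms_length assms(1) by simp
  have "n \<in> set xs" using sx assms(3) by simp
  then obtain P R where xs: "xs = P @ n # R" by (meson split_list)
  define k where "k = length P"
  define m where "m = n - 1 - k"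
  have lR: "length R = m" using lx xs unfolding m_def k_def by simp
  have kn: "k < n" using lx xs unfolding k_def by simp
  have nP: "n \<notin> set P" and nR: "n \<notin> set R" and dP: "distinct P" and dR: "distinct R"
    and PR: "set P \<inter> set R = {}" using dx xs by auto
  have "set P \<union> set R = set xs - {n}" using xs nP nR by auto
  also have "\<dots> = {1..n-1}" using sx by auto
  finally have sPR: "set P \<union> set R = {1..n-1}" .
  have gt: "\<forall>p\<in>set P. \<forall>r\<in>set R. r < p"
  proof (intro ballI, rule ccontr)
    fix p r assume p: "p \<in> set P" and r: "r \<in> set R" and "\<not> r < p"
    then have pr: "p < r" using PR by (cases "p = r") auto
    obtain i where i: "i < length P" "P ! i = p" using p by (meson in_set_conv_nth)
    obtain l where l: "l < length R" "R ! l = r" using r by (meson in_set_conv_nth)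
    have "r \<in> {1..n-1}" using r sPR by blast
    then have "r < n" using assms(3) by auto
    have "contains132 xs" unfolding contains132_def xs
      using i l pr nR \<open>r < n\<close>
      by (intro exI[of _ i] exI[of _ "length P"] exI[of _ "l + Suc (length P)"])
         (auto simp: nth_append r)
    then show False using assms(2) by simp
  qed
  have "set R = {1..card (set R)}"
  proof (rule down_closed)
    show "\<forall>x\<in>set R. x \<ge> 1" using sPR by auto
    show "\<forall>r\<in>set R. \<forall>v. 1 \<le> v \<and> v < r \<longrightarrow> v \<in> set R"
    proof (intro ballI allI impI)
      fix r v assume r: "r \<in> set R" and v: "1 \<le> v \<and> v < r"
      have "r \<in> {1..n-1}" using r sPR by blast
      then have "v \<in> {1..n-1}" using v by auto
      then have "v \<in> set P \<union> set R" using sPR by blast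
      then show "v \<in> set R" using gt r v by (meson UnE not_less_iff_gr_or_eq)
    qed
  qed simp
  then have sR: "set R = {1..m}" using distinct_card[OF dR] lR by simp
  have Pgt: "\<forall>p\<in>set P. m < p \<and> p \<le> n - 1"
  proof
    fix p assume p: "p \<in> set P"
    then have "p \<in> {1..n-1}" using sPR by blast
    moreover have "p \<notin> {1..m}" using p PR sR by blast
    ultimately show "m < p \<and> p \<le> n - 1" by auto
  qed
  define L where "L = map (\<lambda>v. v - m) P"
  have PL: "map (\<lambda>v. v + m) L = P" unfolding L_def using Pgt by (simp add: comp_def map_idI) (metis (no_types, lifting) le_add_diff_inverse2 less_imp_le_nat map_idI)
  have dL: "distinct L" unfolding L_def using dP Pgt
    by (simp add: distinct_map inj_on_def) (metis le_add_diff_inverse2 less_imp_le_nat)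
  have lL: "length L = k" unfolding L_def k_def by simp
  have sLsub: "set L \<subseteq> {1..k}"
  proof
    fix x assume "x \<in> set L"
    then obtain v where v: "v \<in> set P" "x = v - m" unfolding L_def by auto
    then have "m < v \<and> v \<le> n - 1" using Pgt by blast
    then show "x \<in> {1..k}" using v(2) kn unfolding m_def by auto
  qed
  have "card (set L) = card {1..k}" using distinct_card[OF dL] lL by simp
  then have "set L = {1..k}" using sLsub by (simp add: card_subset_eq)
  then have Lp: "L \<in> perms k" using dL unfolding perms_def by simp
  have Rp: "R \<in> perms (n - 1 - k)" using sR dR unfolding perms_def m_def by simp
  have "\<not> contains132 P" using assms(2) xs c132_appL by blast
  then have cL: "\<not> contains132 L" using PL c132_shift by metis
  have cR: "\<not> contains132 R" using assms(2) xs c132_appR[of "n # R" P] c132_appR[of R "[n]"] by auto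
  show ?thesis using kn Lp Rp cL cR xs PL unfolding m_def by blast
qed

definition Av :: "nat \<Rightarrow> nat list set" where
  "Av k = {xs \<in> perms k. \<not> contains132 xs}"

definition build :: "nat \<Rightarrow> nat \<Rightarrow> nat list \<times> nat list \<Rightarrow> nat list" where
  "build n k p = map (\<lambda>v. v + (n - 1 - k)) (fst p) @ n # snd p"

lemma Av_finite: "finite (Av k)"
  unfolding Av_def using perms_finite by simp

lemma n_notin_shift:
  assumes "k < n" "L \<in> perms k"
  shows "n \<notin> set (map (\<lambda>v. v + (n - 1 - k)) L)"
  using assms unfolding perms_def by auto

lemma build_inj:
  assumes "k < n" "k' < n" "fst p \<in> perms k" "fst q \<in> perms k'" "snd p \<in> perms (n - 1 - k)"
    "build n k p = build n k' q"
  shows "k = k' \<and> p = q"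
proof -
  have nR: "n \<notin> set (snd p)" using assms(1,5) unfolding perms_def by auto
  have e: "map (\<lambda>v. v + (n - 1 - k)) (fst p) = map (\<lambda>v. v + (n - 1 - k')) (fst q) \<and> snd p = snd q"
    using assms(6) n_notin_shift[OF assms(1,3)] nR unfolding build_def
    by (subst (asm) append_Cons_eq_iff) auto
  then have "length (fst p) = length (fst q)" by (metis length_map)
  then have kk: "k = k'" using perms_length assms(3,4) by metis
  have "inj (\<lambda>v::nat. v + (n - 1 - k))" by (simp add: inj_def)
  then have "fst p = fst q" using e kk by (simp add: inj_map_eq_map)
  then show ?thesis using e kk by (simp add: prod_eq_iff)
qed

lemma count:
  assumes "n \<ge> 1"
  shows "card {x \<in> Av n. Q x} = (\<Sum>k<n. card {p \<in> Av k \<times> Av (n - 1 - k). Q (build n k p)})"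
proof -
  let ?B = "\<lambda>k. {p \<in> Av k \<times> Av (n - 1 - k). Q (build n k p)}"
  have eq: "{x \<in> Av n. Q x} = (\<Union>k<n. build n k ` ?B k)"
  proof
    show "{x \<in> Av n. Q x} \<subseteq> (\<Union>k<n. build n k ` ?B k)"
    proof
      fix x assume x: "x \<in> {x \<in> Av n. Q x}"
      then obtain k L R where h: "k < n" "L \<in> perms k" "R \<in> perms (n - 1 - k)" "\<not> contains132 L"
        "\<not> contains132 R" "x = map (\<lambda>v. v + (n - 1 - k)) L @ n # R"
        using decomp[of x n] assms unfolding Av_def by auto
      then have "x = build n k (L, R)" unfolding build_def by simp
      moreover have "(L, R) \<in> ?B k" using h x \<open>x = build n k (L, R)\<close> unfolding Av_def by auto
      ultimately show "x \<in> (\<Union>k<n. build n k ` ?B k)" using h(1) by blast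
    qed
  next
    show "(\<Union>k<n. build n k ` ?B k) \<subseteq> {x \<in> Av n. Q x}"
      using build_ok unfolding Av_def build_def by fastforce
  qed
  have "card (\<Union>k<n. build n k ` ?B k) = (\<Sum>k<n. card (build n k ` ?B k))"
  proof (rule card_UN_disjoint)
    show "finite {..<n}" by simp
    show "\<forall>i\<in>{..<n}. finite (build n i ` ?B i)"
      using Av_finite by auto
    show "\<forall>i\<in>{..<n}. \<forall>j\<in>{..<n}. i \<noteq> j \<longrightarrow> build n i ` ?B i \<inter> build n j ` ?B j = {}"
    proof (intro ballI impI)
      fix i j assume ij: "i \<in> {..<n}" "j \<in> {..<n}" "i \<noteq> j"
      show "build n i ` ?B i \<inter> build n j ` ?B j = {}"
      proof (rule ccontr)
        assume "build n i ` ?B i \<inter> build n j ` ?B j \<noteq> {}"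
        then obtain p q where "p \<in> ?B i" "q \<in> ?B j" "build n i p = build n j q" by blast
        then have "i = j" using build_inj[of i n j p q] ij unfolding Av_def by auto
        then show False using ij by simp
      qed
    qed
  qed
  also have "\<dots> = (\<Sum>k<n. card (?B k))"
  proof (rule sum.cong)
    fix k assume k: "k \<in> {..<n}"
    have "inj_on (build n k) (?B k)"
      using build_inj[of k n k] k unfolding inj_on_def Av_def by auto
    then show "card (build n k ` ?B k) = card (?B k)" by (rule card_image)
  qed simp
  finally show ?thesis using eq by simp
qed

definition Qf :: "nat \<Rightarrow> nat list \<Rightarrow> bool" where
  "Qf n xs \<longleftrightarrow> ind xs n - 1 = ind xs (n - 1) \<and> ind xs (n - 1) > 1 \<and>
      \<not> contains123star (small (n - 1) xs)"

lemma char: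
  assumes "2 \<le> n" "k < n" "L \<in> Av k" "R \<in> Av (n - 1 - k)"
  shows "contains123star (build n k (L, R)) \<longleftrightarrow>
           contains123star L \<or> contains123star R \<or> (2 \<le> k \<and> last L = k)"
    and "Qf n (build n k (L, R)) \<longleftrightarrow>
           \<not> contains123star L \<and> \<not> contains123star R \<and> 2 \<le> k \<and> last L = k"
proof -
  let ?m = "n - 1 - k"
  let ?A = "map (\<lambda>v. v + ?m) L"
  let ?x = "?A @ n # R"
  have Lp: "L \<in> perms k" and Rp: "R \<in> perms ?m" using assms(3,4) unfolding Av_def by auto
  have sL: "set L = {1..k}" and dL: "distinct L" using Lp unfolding perms_def by auto
  have lL: "length L = k" using perms_length Lp by simp
  have sR: "set R = {1..?m}" and dR: "distinct R" using Rp unfolding perms_def by auto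
  have sA: "set ?A = {1 + ?m..k + ?m}" using sL by (simp add: image_add_atLeastAtMost')
  have km: "k + ?m = n - 1" using assms(2) by simp
  have dA: "distinct ?A" using dL by (simp add: distinct_map inj_on_def)
  have AR: "\<forall>x\<in>set ?A. \<forall>y\<in>set R. y < x" using sA sR by auto
  have An: "\<forall>x\<in>set ?A. x < n" using sA km assms(2) by auto
  have Rn: "\<forall>x\<in>set R. x < n" using sR assms(2) by auto
  have xp: "?x \<in> perms n" using build_ok[of k n L R] assms(2) Lp Rp assms(3,4) unfolding Av_def by auto
  have dx: "distinct ?x" and sx: "set ?x = {1..n}" using xp unfolding perms_def by auto
  have bx: "build n k (L, R) = ?x" unfolding build_def by simp
  have lastiff: "2 \<le> k \<and> last L = k \<longleftrightarrow> 2 \<le> length ?A \<and> last ?A + 1 = n"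
  proof (cases "L = []")
    case True then show ?thesis using lL by auto
  next
    case False
    then have "last ?A = last L + ?m" by (simp add: last_map)
    then show ?thesis using lL km assms(2) by auto
  qed
  have AnR: "\<forall>x\<in>set (?A @ [n]). \<forall>y\<in>set R. y < x" using AR Rn by auto
  have "?x = (?A @ [n]) @ R" by simp
  then have "contains123star ?x \<longleftrightarrow> contains123star (?A @ [n]) \<or> contains123star R"
    using c123_app[OF AnR] by simp
  also have "\<dots> \<longleftrightarrow> contains123star L \<or> (2 \<le> length ?A \<and> last ?A + 1 = n) \<or> contains123star R"
    using c123_snoc[OF dA An] c123_shift by simp
  finally show "contains123star (build n k (L, R)) \<longleftrightarrow>
           contains123star L \<or> contains123star R \<or> (2 \<le> k \<and> last L = k)"
    unfolding bx using lastiff by blast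
  have f1: "filter (\<lambda>v. v \<le> n - 1) ?A = ?A" using An by (intro filter_True) auto
  have f2: "filter (\<lambda>v. v \<le> n - 1) R = R" using Rn by (intro filter_True) auto
  have sm: "small (n - 1) ?x = ?A @ R"
    unfolding small_def using f1 f2 assms(1) by simp
  have csm: "contains123star (small (n - 1) ?x) \<longleftrightarrow> contains123star L \<or> contains123star R"
    unfolding sm using c123_app[OF AR] c123_shift by simp
  have ixn: "ind ?x n = Suc k"
    using ind_eq[OF dx, of k n] lL by (simp add: nth_append)
  show "Qf n (build n k (L, R)) \<longleftrightarrow>
           \<not> contains123star L \<and> \<not> contains123star R \<and> 2 \<le> k \<and> last L = k"
  proof
    assume q: "Qf n (build n k (L, R))"
    then have i1: "ind ?x (n - 1) = k" and k2: "k > 1" using ixn bx unfolding Qf_def by auto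
    have "n - 1 \<in> set ?x" using sx assms(1) by auto
    from ind_nth[OF this] i1 have "?x ! (k - 1) = n - 1" by simp
    then have "L ! (k - 1) + ?m = n - 1" using k2 lL by (simp add: nth_append)
    then have "L ! (k - 1) = k" using km by simp
    moreover have "L \<noteq> []" using k2 lL by auto
    ultimately have "last L = k" using lL by (simp add: last_conv_nth)
    then show "\<not> contains123star L \<and> \<not> contains123star R \<and> 2 \<le> k \<and> last L = k"
      using q k2 csm bx unfolding Qf_def by auto
  next
    assume h: "\<not> contains123star L \<and> \<not> contains123star R \<and> 2 \<le> k \<and> last L = k"
    have "L \<noteq> []" using h lL by auto
    then have "L ! (length L - 1) = last L" by (rule last_conv_nth[symmetric])
    then have "L ! (k - 1) = k" using lL h by simp
    then have "?x ! (k - 1) = n - 1" using h lL km by (simp add: nth_append)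
    moreover have "k - 1 < length ?x" using lL by simp
    ultimately have "ind ?x (n - 1) = Suc (k - 1)" using ind_eq[OF dx, of "k - 1" "n - 1"] by blast
    then show "Qf n (build n k (L, R))" using h ixn csm bx unfolding Qf_def by auto
  qed
qed

theorem lemma3p20:
  fixes n :: nat
  assumes "n \<ge> 2"
  shows "(\<Sum>i = 0..n-1. g i * g (n - 1 - i)) = g n + f n"
proof -
  let ?P = "\<lambda>k. Av k \<times> Av (n - 1 - k)"
  let ?G = "\<lambda>k. {x \<in> Av k. \<not> contains123star x}"
  have gG: "\<And>k. g k = card (?G k)" unfolding g_def Av_def by (rule arg_cong[where f=card]) auto
  have gn: "g n = (\<Sum>k<n. card {p \<in> ?P k. \<not> contains123star (build n k p)})"
    using gG[of n] count[of n "\<lambda>x. \<not> contains123star x"] assms by simp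
  have "f n = card {x \<in> Av n. Qf n x}" unfolding f_def Av_def Qf_def
    by (rule arg_cong[where f=card]) auto
  then have fn: "f n = (\<Sum>k<n. card {p \<in> ?P k. Qf n (build n k p)})"
    using count[of n "Qf n"] assms by simp
  have "(\<Sum>i = 0..n-1. g i * g (n - 1 - i)) = (\<Sum>k<n. card (?G k \<times> ?G (n - 1 - k)))"
  proof -
    have "{0..n-1} = {..<n}" using assms by auto
    then show ?thesis by (simp add: gG card_cartesian_product)
  qed
  also have "\<dots> = (\<Sum>k<n. card {p \<in> ?P k. \<not> contains123star (build n k p)}
                      + card {p \<in> ?P k. Qf n (build n k p)})"
  proof (rule sum.cong)
    fix k assume k: "k \<in> {..<n}"
    have e: "?G k \<times> ?G (n - 1 - k) = {p \<in> ?P k. \<not> contains123star (build n k p)}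
                  \<union> {p \<in> ?P k. Qf n (build n k p)}"
      using char[OF assms, of k] k by auto
    have d: "{p \<in> ?P k. \<not> contains123star (build n k p)} \<inter> {p \<in> ?P k. Qf n (build n k p)} = {}"
      using char[OF assms, of k] k by auto
    have fin: "finite (?P k)" using Av_finite by simp
    show "card (?G k \<times> ?G (n - 1 - k)) = card {p \<in> ?P k. \<not> contains123star (build n k p)}
                      + card {p \<in> ?P k. Qf n (build n k p)}"
      unfolding e by (rule card_Un_disjoint) (use fin d in auto)
  qed simp
  also have "\<dots> = g n + f n" unfolding gn fn by (simp add: sum.distrib)
  finally show ?thesis .
qed

end
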